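(* The homomorphism $P\Gamma_L\to{\rm PGL}_2(7)$ is surjective.
   Context: Let $\mathcal{O}$ be the ring of integers of $\mathbb{Q}(\sqrt{-7})$, $\Gamma_L$ the unitary group of the standard Hermitian lattice $\mathcal{O}[\tfrac12]^3$, and $P\Gamma_L$ its quotient by scalars; a fixed embedding $\mathcal{O}\to\mathbb{Z}_2$ identifies $P\Gamma_L$ with a lattice in ${\rm PGL}_3(\mathbb{Q}_2)$. With $\theta=\sqrt{-7}$, the Hermitian form induces a nondegenerate symmetric bilinear form on $\mathcal{O}[\tfrac12]^3/\theta\mathcal{O}[\tfrac12]^3\cong\mathbb{F}_7^3$, yielding the homomorphism $P\Gamma_L\to{\rm PO}_3(7)\cong{\rm PGL}_2(7)$ in question. *)

theory Defs
  imports "HOL-Analysis.Analysis"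
begin

text \<open>omega = (1 + sqrt(-7))/2, so O = Z[omega] is the ring of integers of Q(sqrt(-7));
  theta = sqrt(-7). Everything lives inside the complex numbers.\<close>

definition omega7 :: complex where "omega7 = Complex (1/2) (sqrt 7 / 2)"
definition theta7 :: complex where "theta7 = Complex 0 (sqrt 7)"

definition O_half :: "complex set" where
  "O_half = {(of_int a + of_int b * omega7) / 2 ^ k | a b k. True}"

text \<open>Reduction O[1/2] -> O[1/2]/theta O[1/2] = F_7 (F_7 is the type 7).\<close>
definition red7 :: "complex \<Rightarrow> 7" where
  "red7 z = (THE r :: 7. \<exists>n::int. of_int n = r \<and> (z - of_int n) / theta7 \<in> O_half)"

definition conj_transp :: "complex^3^3 \<Rightarrow> complex^3^3" where
  "conj_transp g = (\<chi> i j. cnj (g $ j $ i))"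

definition GammaL :: "(complex^3^3) set" where
  "GammaL = {g. (\<forall>i j. g $ i $ j \<in> O_half) \<and> g ** conj_transp g = mat 1}"

definition red_mat :: "complex^3^3 \<Rightarrow> 7^3^3" where
  "red_mat g = (\<chi> i j. red7 (g $ i $ j))"

text \<open>Orthogonal group of the form sum x_i y_i on F_7^3, and its projectivisation
  (quotient by the scalars in O_3(7), namely +-1); a class is the set {A, -A}.\<close>
definition O3_7 :: "(7^3^3) set" where
  "O3_7 = {A. transpose A ** A = mat 1}"

definition po_class :: "7^3^3 \<Rightarrow> (7^3^3) set" where
  "po_class A = {A, - A}"

definition PO3_7 :: "(7^3^3) set set" where
  "PO3_7 = po_class ` O3_7"

text \<open>The homomorphism P Gamma_L -> PO_3(7), composed with Gamma_L -> P Gamma_L: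
  g maps to the class of its reduction mod theta.\<close>
definition PGammaL_to_PO3 :: "complex^3^3 \<Rightarrow> (7^3^3) set" where
  "PGammaL_to_PO3 g = po_class (red_mat g)"

end

theory Submission
  imports Defs
begin


lemma U7: "(UNIV::7 set) = {0,1,2,3,4,5,6}" 
proof -
  have "x \<in> {0,1,2,3,4,5,6}" for x :: 7
  proof (induct x rule: bit1_induct)
    case (of_int z) then have "z \<in> {0..<7}" by simp
    then have "z \<in> {0,1,2,3,4,5,6}" by (auto simp: atLeastLessThan_def)  
    then show ?case by auto
  qed
  then show ?thesis by auto
qed

lemma all7: "(\<forall>x::7. P x) \<longleftrightarrow> P 0 \<and> P 1 \<and> P 2 \<and> P 3 \<and> P 4 \<and> P 5 \<and> P 6"
  by (metis U7 UNIV_I insertE singletonD)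

lemma U3: "(UNIV::3 set) = {1,2,3}" 
proof -
  have "x \<in> {1,2,3}" for x :: 3
  proof (induct x rule: bit1_induct)
    case (of_int z) then have "z \<in> {0..<3}" by simp
    then have "z \<in> {0,1,2}" by (auto simp: atLeastLessThan_def)  
    then show ?case by auto
  qed
  then show ?thesis by auto
qed

lemma of_int7_cong: "7 dvd (x - y) \<Longrightarrow> (of_int x :: 7) = of_int y"
proof -
  assume "7 dvd (x - y)"
  then obtain m where "x = y + 7 * m" by (metis dvd_def diff_add_cancel add.commute)
  moreover have h7: "(7::7) = 0" by simp
  ultimately show ?thesis by (simp add: h7)
qed

definition Oh :: "int \<Rightarrow> int \<Rightarrow> nat \<Rightarrow> complex" where
  "Oh a b k = (of_int a + of_int b * omega7) / 2 ^ k"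

lemma O_half_Oh: "O_half = {Oh a b k |a b k. True}"
  unfolding O_half_def Oh_def by auto

lemma Oh_in[simp]: "Oh a b k \<in> O_half"
  unfolding O_half_Oh by blast

lemma O_halfE: "z \<in> O_half \<Longrightarrow> (\<And>a b k. z = Oh a b k \<Longrightarrow> P) \<Longrightarrow> P"
  unfolding O_half_Oh by auto

lemma w2: "omega7 * omega7 = omega7 - 2"
  unfolding omega7_def by (simp add: complex_eq_iff power2_eq_square field_simps)

lemma cnj_w: "cnj omega7 = 1 - omega7"
  unfolding omega7_def by (simp add: complex_eq_iff)

lemma theta_w: "theta7 = 2 * omega7 - 1"
  unfolding omega7_def theta7_def by (simp add: complex_eq_iff)

lemma theta_nz: "theta7 \<noteq> 0"
  unfolding theta7_def by (simp add: complex_eq_iff)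

lemma indep: "of_int a + of_int b * omega7 = 0 \<Longrightarrow> a = 0 \<and> b = 0"
proof -
  assume h: "of_int a + of_int b * omega7 = 0"
  have "Im (of_int a + of_int b * omega7) = of_int b * (sqrt 7 / 2)"
    unfolding omega7_def by simp
  then have "b = 0" using h by simp
  then show ?thesis using h by simp
qed

lemma Oh_add: "Oh a1 b1 k1 + Oh a2 b2 k2 = Oh (a1*2^k2 + a2*2^k1) (b1*2^k2 + b2*2^k1) (k1+k2)"
  unfolding Oh_def by (simp add: field_simps power_add)

lemma Oh_mult: "Oh a1 b1 k1 * Oh a2 b2 k2 = Oh (a1*a2 - 2*b1*b2) (a1*b2+a2*b1+b1*b2) (k1+k2)"
proof -
  have "(of_int a1 + of_int b1 * omega7) * (of_int a2 + of_int b2 * omega7)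
      = of_int a1 * of_int a2 + (of_int a1 * of_int b2 + of_int a2 * of_int b1) * omega7 + of_int b1 * of_int b2 * (omega7 * omega7)"
    by (simp add: algebra_simps)
  also have "\<dots> = of_int (a1*a2 - 2*b1*b2) + of_int (a1*b2+a2*b1+b1*b2) * omega7"
    by (simp add: w2 algebra_simps)
  finally show ?thesis unfolding Oh_def by (simp add: power_add)
qed

lemma Oh_neg: "- Oh a b k = Oh (-a) (-b) k"
  unfolding Oh_def by (simp add: field_simps)

lemma Oh_cnj: "cnj (Oh a b k) = Oh (a+b) (-b) k"
  unfolding Oh_def by (simp add: cnj_w algebra_simps)

lemma Oh_eq: "Oh a b k = Oh c d j \<Longrightarrow> a * 2^j = c * 2^k \<and> b * 2^j = d * 2^k"
proof -
  assume h: "Oh a b k = Oh c d j"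
  then have "(of_int a + of_int b * omega7) * 2^j = (of_int c + of_int d * omega7) * 2^k"
    unfolding Oh_def by (simp add: field_simps)
  then have "of_int (a * 2^j - c * 2^k) + of_int (b * 2^j - d * 2^k) * omega7 = 0"
    by (simp add: algebra_simps)
  from indep[OF this] show ?thesis by simp
qed

lemma theta_Oh: "theta7 * Oh c d j = Oh (-c-4*d) (2*c+d) j"
proof -
  have "theta7 * (of_int c + of_int d * omega7) = (2 * of_int d) * (omega7 * omega7) + (2 * of_int c - of_int d) * omega7 - of_int c"
    by (simp add: theta_w algebra_simps)
  also have "\<dots> = of_int (-c-4*d) + of_int (2*c+d) * omega7"
    by (simp add: w2 algebra_simps)
  finally show ?thesis unfolding Oh_def by simp
qed

lemma div_theta: "Oh a b k / theta7 \<in> O_half \<longleftrightarrow> 7 dvd (a + 4*b)"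
proof
  assume "Oh a b k / theta7 \<in> O_half"
  then obtain c d j where e: "Oh a b k / theta7 = Oh c d j" by (rule O_halfE)
  then have "Oh a b k = theta7 * Oh c d j" using theta_nz by (simp add: field_simps)
  then have "Oh a b k = Oh (-c-4*d) (2*c+d) j" by (simp add: theta_Oh)
  from Oh_eq[OF this] have "(a + 4*b) * 2^j = 7 * (c * 2^k)" by (simp add: algebra_simps)
  then have "7 dvd (a + 4*b) * 2^j" by simp
  moreover have "coprime (7::int) (2^j)" by simp
  ultimately show "7 dvd (a + 4*b)" using coprime_dvd_mult_left_iff by blast
next
  assume "7 dvd (a + 4*b)"
  then obtain m where m: "a + 4*b = 7*m" by auto
  have "theta7 * Oh m (b - 2*m) k = Oh a b k" unfolding theta_Oh using m
    by (smt (verit) Oh_def)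
  then have "Oh a b k / theta7 = Oh m (b-2*m) k" using theta_nz by (simp add: field_simps)
  then show "Oh a b k / theta7 \<in> O_half" by simp
qed




lemma pow8_7: "(8::int)^k mod 7 = 1"
proof -
  have "(8::int)^k mod 7 = (8 mod 7)^k mod 7" by (rule power_mod[symmetric])
  then show ?thesis by simp
qed

lemma h8: "(8::7) = 1" by simp
lemma p8: "(8::7)^k = 1" by (simp add: h8)

lemma of_int8: "(of_int ((8::int)^k) :: 7) = 1"
proof -
  show ?thesis using p8 by simp
qed

lemma red7_Oh: "red7 (Oh a b k) = of_int ((a + 4*b) * 4^k)"
proof -
  let ?r = "of_int ((a + 4*b) * 4^k) :: 7"
  have P: "(\<exists>n::int. of_int n = r \<and> (Oh a b k - of_int n) / theta7 \<in> O_half) \<longleftrightarrow> r = ?r" for r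
  proof
    assume "\<exists>n::int. of_int n = r \<and> (Oh a b k - of_int n) / theta7 \<in> O_half"
    then obtain n where n: "of_int n = r" "(Oh a b k - of_int n) / theta7 \<in> O_half" by blast
    have "Oh a b k - of_int n = Oh (a - n * 2^k) b k" unfolding Oh_def by (simp add: field_simps)
    with n(2) have "7 dvd (a - n*2^k + 4*b)" using div_theta by simp
    then have "(of_int (a + 4*b) :: 7) = of_int (n * 2^k)"
      by (intro of_int7_cong) (simp add: algebra_simps)
    then have "(of_int (a + 4*b) :: 7) * 4^k = of_int n * (2^k * 4^k)" by simp
    also have "(2::7)^k * 4^k = 1" using p8 by (simp add: power_mult_distrib[symmetric])
    finally show "r = ?r" using n(1) by simp
  next
    assume r: "r = ?r"
    have "Oh a b k - of_int ((a + 4*b) * 4^k) = Oh (a - (a + 4*b) * 4^k * 2^k) b k"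
      unfolding Oh_def by (simp add: field_simps)
    moreover have "7 dvd (a - (a + 4*b) * 4^k * 2^k + 4*b)"
    proof -
      have "(a + 4*b) * 4^k * 2^k = (a+4*b) * 8^k" by (simp add: power_mult_distrib[symmetric])
      moreover have "7 dvd (8::int)^k - 1" using pow8_7[of k] mod_eq_dvd_iff[of "(8::int)^k" 7 1] by simp
      then have "7 dvd (a+4*b) * (8^k - 1)" by simp
      moreover have "a - (a + 4*b) * 4^k * 2^k + 4*b = - ((a+4*b) * (8^k - 1))"
        using calculation(1) by (simp add: algebra_simps)
      ultimately show ?thesis by (metis dvd_minus_iff)
    qed
    ultimately have "(Oh a b k - of_int ((a + 4*b) * 4^k)) / theta7 \<in> O_half"
      using div_theta by simp
    then show "\<exists>n::int. of_int n = r \<and> (Oh a b k - of_int n) / theta7 \<in> O_half"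
      using r by blast
  qed
  show ?thesis unfolding red7_def P by simp
qed




lemma two4: "(2::7)^k * 4^k = 1" using p8 by (simp add: power_mult_distrib[symmetric])

lemma O_add: "x \<in> O_half \<Longrightarrow> y \<in> O_half \<Longrightarrow> x + y \<in> O_half \<and> red7 (x + y) = red7 x + red7 y"
proof -
  assume "x \<in> O_half" "y \<in> O_half"
  then obtain a1 b1 k1 a2 b2 k2 where x: "x = Oh a1 b1 k1" and y: "y = Oh a2 b2 k2"
    by (metis O_halfE)
  have "(of_int ((a1 * 2 ^ k2 + a2 * 2 ^ k1 + 4 * (b1 * 2 ^ k2 + b2 * 2 ^ k1)) * 4 ^ (k1 + k2)) :: 7)
     = of_int (a1 + 4*b1) * 4^k1 * (2^k2 * 4^k2) + of_int (a2 + 4*b2) * 4^k2 * (2^k1 * 4^k1)"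
    by (simp add: algebra_simps power_add)
  then show ?thesis unfolding x y Oh_add by (simp add: red7_Oh two4)
qed

lemma O_mult: "x \<in> O_half \<Longrightarrow> y \<in> O_half \<Longrightarrow> x * y \<in> O_half \<and> red7 (x * y) = red7 x * red7 y"
proof -
  assume "x \<in> O_half" "y \<in> O_half"
  then obtain a1 b1 k1 a2 b2 k2 where x: "x = Oh a1 b1 k1" and y: "y = Oh a2 b2 k2"
    by (metis O_halfE)
  have h16: "(16::7) = 2" by simp
  have "(of_int ((a1 * a2 - 2 * b1 * b2 + 4 * (a1 * b2 + a2 * b1 + b1 * b2)) * 4 ^ (k1 + k2)) :: 7)
     = of_int (a1 + 4*b1) * 4^k1 * (of_int (a2 + 4*b2) * 4^k2)"
    by (simp add: algebra_simps power_add h16)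
  then show ?thesis unfolding x y Oh_mult by (simp add: red7_Oh)
qed

lemma O_cnj: "x \<in> O_half \<Longrightarrow> cnj x \<in> O_half \<and> red7 (cnj x) = red7 x"
proof -
  assume "x \<in> O_half"
  then obtain a b k where x: "x = Oh a b k" by (metis O_halfE)
  have "(of_int ((a + b + 4 * (-b)) * 4^k) :: 7) = of_int ((a + 4*b) * 4^k)"
    by (rule of_int7_cong) (simp add: algebra_simps)
  then show ?thesis unfolding x Oh_cnj by (simp add: red7_Oh)
qed

lemma O_0: "0 \<in> O_half \<and> red7 0 = 0"
proof -
  have e: "Oh 0 0 0 = 0" by (simp add: Oh_def)
  show ?thesis using Oh_in[of 0 0 0] red7_Oh[of 0 0 0] unfolding e by simp
qed

lemma O_1: "1 \<in> O_half \<and> red7 1 = 1"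
proof -
  have e: "Oh 1 0 0 = 1" by (simp add: Oh_def)
  show ?thesis using Oh_in[of 1 0 0] red7_Oh[of 1 0 0] unfolding e by simp
qed

lemma O_sum: "finite F \<Longrightarrow> (\<forall>i\<in>F. f i \<in> O_half) \<Longrightarrow> sum f F \<in> O_half \<and> red7 (sum f F) = (\<Sum>i\<in>F. red7 (f i))"
proof (induction F rule: finite_induct)
  case empty then show ?case using O_0 by simp
next
  case (insert x F) then show ?case using O_add by simp
qed

definition red_ok :: "complex^3^3 \<Rightarrow> bool" where "red_ok g = (\<forall>i j. g $ i $ j \<in> O_half)"

lemma mult_ok: "red_ok g \<Longrightarrow> red_ok h \<Longrightarrow> red_ok (g ** h) \<and> red_mat (g ** h) = red_mat g ** red_mat h"
proof -
  assume g: "red_ok g" and h: "red_ok h"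
  have e: "\<forall>k\<in>UNIV. g $ i $ k * h $ k $ j \<in> O_half" for i j
    using g h O_mult unfolding red_ok_def by blast
  have "(\<Sum>k\<in>UNIV. red7 (g $ i $ k * h $ k $ j)) = (\<Sum>k\<in>UNIV. red7 (g $ i $ k) * red7 (h $ k $ j))" for i j
    using g h O_mult unfolding red_ok_def by (meson sum.cong)
  moreover have "(\<Sum>k\<in>UNIV. g $ i $ k * h $ k $ j) \<in> O_half \<and> red7 (\<Sum>k\<in>UNIV. g $ i $ k * h $ k $ j) = (\<Sum>k\<in>UNIV. red7 (g $ i $ k * h $ k $ j))" for i j
    using O_sum[of UNIV, OF _ e] by simp
  ultimately show ?thesis 
    unfolding red_ok_def red_mat_def matrix_matrix_mult_def by (simp add: vec_eq_iff)
qed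

lemma ct_ok: "red_ok g \<Longrightarrow> red_ok (conj_transp g) \<and> red_mat (conj_transp g) = transpose (red_mat g)"
  unfolding red_ok_def red_mat_def conj_transp_def transpose_def using O_cnj by (simp add: vec_eq_iff)

lemma one_ok: "red_ok (mat 1) \<and> red_mat (mat 1) = mat 1"
  unfolding red_ok_def red_mat_def using O_0 O_1 by (simp add: vec_eq_iff mat_def)

lemma ct_mult: "conj_transp (g ** h) = conj_transp h ** conj_transp g"
  unfolding conj_transp_def matrix_matrix_mult_def by (simp add: vec_eq_iff mult.commute)

lemma GammaL_ok: "g \<in> GammaL \<Longrightarrow> red_ok g" unfolding GammaL_def red_ok_def by simp

lemma GammaL_left: "g \<in> GammaL \<Longrightarrow> conj_transp g ** g = mat 1"
proof -
  assume "g \<in> GammaL"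
  then have r: "g ** conj_transp g = mat 1" unfolding GammaL_def by simp
  then show ?thesis by (rule matrix_left_right_inverse1)
qed

lemma GammaL_mult: "g \<in> GammaL \<Longrightarrow> h \<in> GammaL \<Longrightarrow> g ** h \<in> GammaL"
proof -
  assume g: "g \<in> GammaL" and h: "h \<in> GammaL"
  have "(g ** h) ** conj_transp (g ** h) = g ** (h ** conj_transp h) ** conj_transp g"
    by (simp add: ct_mult matrix_mul_assoc)
  also have "\<dots> = mat 1" using g h unfolding GammaL_def by simp
  finally show ?thesis using mult_ok[OF GammaL_ok[OF g] GammaL_ok[OF h]]
    unfolding GammaL_def red_ok_def by simp
qed

definition HH :: "(7^3^3) set" where "HH = red_mat ` GammaL"

lemma HH_mult: "A \<in> HH \<Longrightarrow> B \<in> HH \<Longrightarrow> A ** B \<in> HH"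
proof -
  assume "A \<in> HH" "B \<in> HH"
  then obtain g h where g: "g \<in> GammaL" "A = red_mat g" and h: "h \<in> GammaL" "B = red_mat h"
    unfolding HH_def by auto
  have "red_mat (g ** h) = A ** B" using mult_ok[OF GammaL_ok[OF g(1)] GammaL_ok[OF h(1)]] g h by simp
  moreover have "g ** h \<in> GammaL" using GammaL_mult g h by simp
  ultimately show ?thesis unfolding HH_def by (metis image_eqI)
qed

lemma HH_orth: "A \<in> HH \<Longrightarrow> A ** transpose A = mat 1 \<and> transpose A ** A = mat 1"
proof -
  assume "A \<in> HH"
  then obtain g where g: "g \<in> GammaL" "A = red_mat g" unfolding HH_def by auto
  have o: "red_ok g" "red_ok (conj_transp g)" using GammaL_ok[OF g(1)] ct_ok by auto
  have "red_mat (g ** conj_transp g) = mat 1" using g(1) one_ok unfolding GammaL_def by simp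
  moreover have "red_mat (conj_transp g ** g) = mat 1" using GammaL_left[OF g(1)] one_ok by simp
  ultimately show ?thesis using mult_ok[OF o] mult_ok[OF o(2) o(1)] ct_ok[OF o(1)] g(2) by simp
qed

lemma sub: "PGammaL_to_PO3 ` GammaL \<subseteq> PO3_7"
proof
  fix X assume "X \<in> PGammaL_to_PO3 ` GammaL"
  then obtain g where g: "g \<in> GammaL" "X = po_class (red_mat g)" unfolding PGammaL_to_PO3_def by auto
  then have "red_mat g \<in> O3_7" using HH_orth unfolding O3_7_def HH_def by blast
  then show "X \<in> PO3_7" unfolding PO3_7_def using g by simp
qed




definition mk3 :: "'a \<Rightarrow> 'a \<Rightarrow> 'a \<Rightarrow> 'a \<Rightarrow> 'a \<Rightarrow> 'a \<Rightarrow> 'a \<Rightarrow> 'a \<Rightarrow> 'a \<Rightarrow> 'a^3^3" where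
  "mk3 a b c d e f g h i = (\<chi> r s. if r = 1 then (if s = 1 then a else if s = 2 then b else c)
     else if r = 2 then (if s = 1 then d else if s = 2 then e else f)
     else (if s = 1 then g else if s = 2 then h else i))"

definition mkv :: "'a \<Rightarrow> 'a \<Rightarrow> 'a \<Rightarrow> 'a^3" where
  "mkv x y z = (\<chi> r. if r = 1 then x else if r = 2 then y else z)"

lemma ex3: "(\<forall>r::3. P r) \<longleftrightarrow> P 1 \<and> P 2 \<and> P 3"
proof -
  have "(\<forall>r::3. P r) \<longleftrightarrow> (\<forall>r\<in>UNIV. P r)" by simp
  also have "\<dots> \<longleftrightarrow> P 1 \<and> P 2 \<and> P 3" unfolding U3 by simp
  finally show ?thesis .
qed

lemma d3: "(1::3) \<noteq> 2" "(1::3) \<noteq> 3" "(2::3) \<noteq> 3" by simp_all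
lemma sum3: "(\<Sum>k\<in>(UNIV::3 set). f k) = f 1 + f 2 + f 3"
  unfolding U3 using d3 by (simp add: add.assoc)

lemma mk3_nth[simp]: "mk3 a b c d e f g h i $ 1 $ 1 = a" "mk3 a b c d e f g h i $ 1 $ 2 = b" "mk3 a b c d e f g h i $ 1 $ 3 = c"
  "mk3 a b c d e f g h i $ 2 $ 1 = d" "mk3 a b c d e f g h i $ 2 $ 2 = e" "mk3 a b c d e f g h i $ 2 $ 3 = f"
  "mk3 a b c d e f g h i $ 3 $ 1 = g" "mk3 a b c d e f g h i $ 3 $ 2 = h" "mk3 a b c d e f g h i $ 3 $ 3 = i"
  by (simp_all add: mk3_def)

lemma mkv_nth[simp]: "mkv x y z $ 1 = x" "mkv x y z $ 2 = y" "mkv x y z $ 3 = z"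
  by (simp_all add: mkv_def)

lemma mk3_ext: "(\<And>r s. M $ r $ s = N $ r $ s) \<Longrightarrow> M = N" by (simp add: vec_eq_iff)

lemma mk3_eta: "M = mk3 (M$1$1) (M$1$2) (M$1$3) (M$2$1) (M$2$2) (M$2$3) (M$3$1) (M$3$2) (M$3$3)"
  by (simp add: vec_eq_iff ex3)

lemma mk3_eq: "mk3 a b c d e f g h i = mk3 a' b' c' d' e' f' g' h' i' \<longleftrightarrow>
   a = a' \<and> b = b' \<and> c = c' \<and> d = d' \<and> e = e' \<and> f = f' \<and> g = g' \<and> h = h' \<and> i = i'"
  by (simp add: vec_eq_iff ex3)

lemma mkv_eq: "mkv a b c = mkv a' b' c' \<longleftrightarrow> a = a' \<and> b = b' \<and> c = c'"
  by (simp add: vec_eq_iff ex3)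

lemma mk3_mult: "(mk3 a b c d e f g h i :: 'a::comm_ring_1^3^3) ** mk3 A B C D E F G H I =
  mk3 (a*A+b*D+c*G) (a*B+b*E+c*H) (a*C+b*F+c*I)
      (d*A+e*D+f*G) (d*B+e*E+f*H) (d*C+e*F+f*I)
      (g*A+h*D+i*G) (g*B+h*E+i*H) (g*C+h*F+i*I)"
  unfolding matrix_matrix_mult_def by (simp add: vec_eq_iff ex3 sum3)

lemma mk3_mulv: "(mk3 a b c d e f g h i :: 'a::comm_ring_1^3^3) *v mkv x y z =
  mkv (a*x+b*y+c*z) (d*x+e*y+f*z) (g*x+h*y+i*z)"
  unfolding matrix_vector_mult_def by (simp add: vec_eq_iff ex3 sum3)

lemma mk3_transpose: "transpose (mk3 a b c d e f g h i) = mk3 a d g b e h c f i"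
  unfolding transpose_def by (simp add: vec_eq_iff ex3)

lemma mk3_one: "(mat 1 :: 'a::comm_ring_1^3^3) = mk3 1 0 0 0 1 0 0 0 1"
  unfolding mat_def by (simp add: vec_eq_iff ex3)

lemma mk3_ct: "conj_transp (mk3 a b c d e f g h i) = mk3 (cnj a) (cnj d) (cnj g) (cnj b) (cnj e) (cnj h) (cnj c) (cnj f) (cnj i)"
  unfolding conj_transp_def by (simp add: vec_eq_iff ex3)

lemma mk3_red: "red_mat (mk3 a b c d e f g h i) = mk3 (red7 a) (red7 b) (red7 c) (red7 d) (red7 e) (red7 f) (red7 g) (red7 h) (red7 i)"
  unfolding red_mat_def by (simp add: vec_eq_iff ex3)

lemma mk3_inGamma: "a \<in> O_half \<Longrightarrow> b \<in> O_half \<Longrightarrow> c \<in> O_half \<Longrightarrow> d \<in> O_half \<Longrightarrow> e \<in> O_half \<Longrightarrow>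
  f \<in> O_half \<Longrightarrow> g \<in> O_half \<Longrightarrow> h \<in> O_half \<Longrightarrow> i \<in> O_half \<Longrightarrow>
  mk3 a b c d e f g h i ** conj_transp (mk3 a b c d e f g h i) = mat 1 \<Longrightarrow> mk3 a b c d e f g h i \<in> GammaL"
  unfolding GammaL_def by (simp add: ex3)

lemma Oh_z: "Oh 0 0 0 = 0" and Oh_o: "Oh 1 0 0 = 1" and Oh_m: "Oh (-1) 0 0 = -1"
  and Oh_w2: "Oh 0 1 1 = omega7/2" and Oh_wm: "Oh (-1) 1 1 = (omega7 - 1)/2" and Oh_mw: "Oh 1 (-1) 1 = (1 - omega7)/2"
  by (simp_all add: Oh_def)

lemma red_z: "red7 0 = 0" and red_o: "red7 1 = 1" and red_m: "red7 (-1) = -1"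
  and red_w2: "red7 (omega7/2) = 2" and red_wm: "red7 ((omega7 - 1)/2) = 5" and red_mw: "red7 ((1 - omega7)/2) = 2"
  using red7_Oh[of 0 0 0] red7_Oh[of 1 0 0] red7_Oh[of "-1" 0 0] red7_Oh[of 0 1 1]
    red7_Oh[of "-1" 1 1] red7_Oh[of 1 "-1" 1]
  unfolding Oh_z Oh_o Oh_m Oh_w2 Oh_wm Oh_mw by simp_all

lemma in_z: "0 \<in> O_half" and in_o: "1 \<in> O_half" and in_m: "-1 \<in> O_half"
  and in_w2: "omega7/2 \<in> O_half" and in_wm: "(omega7 - 1)/2 \<in> O_half" and in_mw: "(1 - omega7)/2 \<in> O_half"
  using Oh_in[of 0 0 0] Oh_in[of 1 0 0] Oh_in[of "-1" 0 0] Oh_in[of 0 1 1]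
    Oh_in[of "-1" 1 1] Oh_in[of 1 "-1" 1]
  unfolding Oh_z Oh_o Oh_m Oh_w2 Oh_wm Oh_mw by simp_all

lemmas ins = in_z in_o in_m in_w2 in_wm in_mw
lemmas reds = red_z red_o red_m red_w2 red_wm red_mw

lemma wcw: "omega7 * cnj omega7 = 2" by (simp add: cnj_w w2 algebra_simps)

lemma R12_H: "mk3 2 2 0 5 2 0 0 0 1 \<in> HH"
proof -
  let ?g = "mk3 (omega7/2) (omega7/2) 0 ((omega7 - 1)/2) ((1 - omega7)/2) 0 0 0 1"
  have "?g ** conj_transp ?g = mat 1"
    unfolding mk3_ct mk3_mult mk3_one mk3_eq by (simp add: cnj_w field_simps w2)
  then have "?g \<in> GammaL" by (intro mk3_inGamma) (simp_all add: ins)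
  moreover have "red_mat ?g = mk3 2 2 0 5 2 0 0 0 1" unfolding mk3_red by (simp add: reds)
  ultimately show ?thesis unfolding HH_def by (metis image_eqI)
qed

lemma R23_H: "mk3 1 0 0 0 2 2 0 5 2 \<in> HH"
proof -
  let ?g = "mk3 1 0 0 0 (omega7/2) (omega7/2) 0 ((omega7 - 1)/2) ((1 - omega7)/2)"
  have "?g ** conj_transp ?g = mat 1"
    unfolding mk3_ct mk3_mult mk3_one mk3_eq by (simp add: cnj_w field_simps w2)
  then have "?g \<in> GammaL" by (intro mk3_inGamma) (simp_all add: ins)
  moreover have "red_mat ?g = mk3 1 0 0 0 2 2 0 5 2" unfolding mk3_red by (simp add: reds)
  ultimately show ?thesis unfolding HH_def by (metis image_eqI)
qed

lemma D3_H: "mk3 1 0 0 0 1 0 0 0 (-1) \<in> HH"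
proof -
  let ?g = "mk3 1 0 0 0 1 0 0 0 (-1::complex)"
  have "?g ** conj_transp ?g = mat 1"
    unfolding mk3_ct mk3_mult mk3_one mk3_eq by simp
  then have "?g \<in> GammaL" by (intro mk3_inGamma) (simp_all add: ins)
  moreover have "red_mat ?g = mk3 1 0 0 0 1 0 0 0 (-1)" unfolding mk3_red by (simp add: reds)
  ultimately show ?thesis unfolding HH_def by (metis image_eqI)
qed

lemma I_H: "mk3 1 0 0 0 1 0 0 0 1 \<in> HH"
proof -
  have "conj_transp (mat 1 :: complex^3^3) = mat 1" unfolding mk3_one mk3_ct by simp
  then have "mat 1 \<in> GammaL" unfolding GammaL_def using one_ok unfolding red_ok_def
    by simp
  then show ?thesis unfolding HH_def using one_ok by (metis image_eqI mk3_one)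
qed




definition S1 :: "(7^3) set" where "S1 = {v. \<exists>h\<in>HH. h *v mkv 1 0 0 = v}"

lemma S1_step: "v \<in> S1 \<Longrightarrow> G \<in> HH \<Longrightarrow> G *v v \<in> S1"
proof -
  assume "v \<in> S1" "G \<in> HH"
  then obtain h where h: "h \<in> HH" "h *v mkv 1 0 0 = v" unfolding S1_def by auto
  have "(G ** h) *v mkv 1 0 0 = G *v v" using h by (simp add: matrix_vector_mul_assoc[symmetric])
  then show ?thesis unfolding S1_def using HH_mult[OF \<open>G \<in> HH\<close> h(1)] by blast
qed

lemma s0: "mkv 1 0 0 \<in> S1"
proof -
  have "mk3 1 0 0 0 1 0 0 0 1 *v mkv 1 0 0 = (mkv 1 0 0 :: 7^3)" by (simp add: mk3_mulv)
  then show ?thesis unfolding S1_def using I_H by blast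
qed

lemma s1: "(mkv 2 5 0) \<in> S1"
proof -
  have e: "(mk3 2 2 0 5 2 0 0 0 1) *v (mkv 1 0 0) = ((mkv 2 5 0) :: 7^3)" by (simp add: mk3_mulv mkv_eq)
  show ?thesis using S1_step[OF s0 R12_H] unfolding e .
qed

lemma s2: "(mkv 0 6 0) \<in> S1"
proof -
  have e: "(mk3 2 2 0 5 2 0 0 0 1) *v (mkv 2 5 0) = ((mkv 0 6 0) :: 7^3)" by (simp add: mk3_mulv mkv_eq)
  show ?thesis using S1_step[OF s1 R12_H] unfolding e .
qed

lemma s3: "(mkv 2 3 4) \<in> S1"
proof -
  have e: "(mk3 1 0 0 0 2 2 0 5 2) *v (mkv 2 5 0) = ((mkv 2 3 4) :: 7^3)" by (simp add: mk3_mulv mkv_eq)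
  show ?thesis using S1_step[OF s1 R23_H] unfolding e .
qed

lemma s4: "(mkv 5 5 0) \<in> S1"
proof -
  have e: "(mk3 2 2 0 5 2 0 0 0 1) *v (mkv 0 6 0) = ((mkv 5 5 0) :: 7^3)" by (simp add: mk3_mulv mkv_eq)
  show ?thesis using S1_step[OF s2 R12_H] unfolding e .
qed

lemma s5: "(mkv 0 5 2) \<in> S1"
proof -
  have e: "(mk3 1 0 0 0 2 2 0 5 2) *v (mkv 0 6 0) = ((mkv 0 5 2) :: 7^3)" by (simp add: mk3_mulv mkv_eq)
  show ?thesis using S1_step[OF s2 R23_H] unfolding e .
qed

lemma s6: "(mkv 3 2 4) \<in> S1"
proof -
  have e: "(mk3 2 2 0 5 2 0 0 0 1) *v (mkv 2 3 4) = ((mkv 3 2 4) :: 7^3)" by (simp add: mk3_mulv mkv_eq)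
  show ?thesis using S1_step[OF s3 R12_H] unfolding e .
qed

lemma s7: "(mkv 2 0 2) \<in> S1"
proof -
  have e: "(mk3 1 0 0 0 2 2 0 5 2) *v (mkv 2 3 4) = ((mkv 2 0 2) :: 7^3)" by (simp add: mk3_mulv mkv_eq)
  show ?thesis using S1_step[OF s3 R23_H] unfolding e .
qed

lemma s8: "(mkv 6 0 0) \<in> S1"
proof -
  have e: "(mk3 2 2 0 5 2 0 0 0 1) *v (mkv 5 5 0) = ((mkv 6 0 0) :: 7^3)" by (simp add: mk3_mulv mkv_eq)
  show ?thesis using S1_step[OF s4 R12_H] unfolding e .
qed

lemma s9: "(mkv 5 3 4) \<in> S1"
proof -
  have e: "(mk3 1 0 0 0 2 2 0 5 2) *v (mkv 5 5 0) = ((mkv 5 3 4) :: 7^3)" by (simp add: mk3_mulv mkv_eq)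
  show ?thesis using S1_step[OF s4 R23_H] unfolding e .
qed

lemma s10: "(mkv 3 3 2) \<in> S1"
proof -
  have e: "(mk3 2 2 0 5 2 0 0 0 1) *v (mkv 0 5 2) = ((mkv 3 3 2) :: 7^3)" by (simp add: mk3_mulv mkv_eq)
  show ?thesis using S1_step[OF s5 R12_H] unfolding e .
qed

lemma s11: "(mkv 0 0 1) \<in> S1"
proof -
  have e: "(mk3 1 0 0 0 2 2 0 5 2) *v (mkv 0 5 2) = ((mkv 0 0 1) :: 7^3)" by (simp add: mk3_mulv mkv_eq)
  show ?thesis using S1_step[OF s5 R23_H] unfolding e .
qed

lemma s12: "(mkv 3 5 4) \<in> S1"
proof -
  have e: "(mk3 2 2 0 5 2 0 0 0 1) *v (mkv 3 2 4) = ((mkv 3 5 4) :: 7^3)" by (simp add: mk3_mulv mkv_eq)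
  show ?thesis using S1_step[OF s6 R12_H] unfolding e .
qed

lemma s13: "(mkv 4 3 2) \<in> S1"
proof -
  have e: "(mk3 2 2 0 5 2 0 0 0 1) *v (mkv 2 0 2) = ((mkv 4 3 2) :: 7^3)" by (simp add: mk3_mulv mkv_eq)
  show ?thesis using S1_step[OF s7 R12_H] unfolding e .
qed

lemma s14: "(mkv 2 4 4) \<in> S1"
proof -
  have e: "(mk3 1 0 0 0 2 2 0 5 2) *v (mkv 2 0 2) = ((mkv 2 4 4) :: 7^3)" by (simp add: mk3_mulv mkv_eq)
  show ?thesis using S1_step[OF s7 R23_H] unfolding e .
qed

lemma s15: "(mkv 5 2 0) \<in> S1"
proof -
  have e: "(mk3 2 2 0 5 2 0 0 0 1) *v (mkv 6 0 0) = ((mkv 5 2 0) :: 7^3)" by (simp add: mk3_mulv mkv_eq)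
  show ?thesis using S1_step[OF s8 R12_H] unfolding e .
qed

lemma s16: "(mkv 5 0 2) \<in> S1"
proof -
  have e: "(mk3 1 0 0 0 2 2 0 5 2) *v (mkv 5 3 4) = ((mkv 5 0 2) :: 7^3)" by (simp add: mk3_mulv mkv_eq)
  show ?thesis using S1_step[OF s9 R23_H] unfolding e .
qed

lemma s17: "(mkv 3 3 5) \<in> S1"
proof -
  have e: "(mk3 1 0 0 0 2 2 0 5 2) *v (mkv 3 3 2) = ((mkv 3 3 5) :: 7^3)" by (simp add: mk3_mulv mkv_eq)
  show ?thesis using S1_step[OF s10 R23_H] unfolding e .
qed

lemma s18: "(mkv 0 2 2) \<in> S1"
proof -
  have e: "(mk3 1 0 0 0 2 2 0 5 2) *v (mkv 0 0 1) = ((mkv 0 2 2) :: 7^3)" by (simp add: mk3_mulv mkv_eq)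
  show ?thesis using S1_step[OF s11 R23_H] unfolding e .
qed

lemma s19: "(mkv 3 4 5) \<in> S1"
proof -
  have e: "(mk3 1 0 0 0 2 2 0 5 2) *v (mkv 3 5 4) = ((mkv 3 4 5) :: 7^3)" by (simp add: mk3_mulv mkv_eq)
  show ?thesis using S1_step[OF s12 R23_H] unfolding e .
qed

lemma s20: "(mkv 4 3 5) \<in> S1"
proof -
  have e: "(mk3 1 0 0 0 2 2 0 5 2) *v (mkv 4 3 2) = ((mkv 4 3 5) :: 7^3)" by (simp add: mk3_mulv mkv_eq)
  show ?thesis using S1_step[OF s13 R23_H] unfolding e .
qed

lemma s21: "(mkv 5 4 4) \<in> S1"
proof -
  have e: "(mk3 2 2 0 5 2 0 0 0 1) *v (mkv 2 4 4) = ((mkv 5 4 4) :: 7^3)" by (simp add: mk3_mulv mkv_eq)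
  show ?thesis using S1_step[OF s14 R12_H] unfolding e .
qed

lemma s22: "(mkv 2 2 0) \<in> S1"
proof -
  have e: "(mk3 1 0 0 0 2 2 0 5 2) *v (mkv 2 4 4) = ((mkv 2 2 0) :: 7^3)" by (simp add: mk3_mulv mkv_eq)
  show ?thesis using S1_step[OF s14 R23_H] unfolding e .
qed

lemma s23: "(mkv 0 1 0) \<in> S1"
proof -
  have e: "(mk3 2 2 0 5 2 0 0 0 1) *v (mkv 5 2 0) = ((mkv 0 1 0) :: 7^3)" by (simp add: mk3_mulv mkv_eq)
  show ?thesis using S1_step[OF s15 R12_H] unfolding e .
qed

lemma s24: "(mkv 5 4 3) \<in> S1"
proof -
  have e: "(mk3 1 0 0 0 2 2 0 5 2) *v (mkv 5 2 0) = ((mkv 5 4 3) :: 7^3)" by (simp add: mk3_mulv mkv_eq)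
  show ?thesis using S1_step[OF s15 R23_H] unfolding e .
qed

lemma s25: "(mkv 3 4 2) \<in> S1"
proof -
  have e: "(mk3 2 2 0 5 2 0 0 0 1) *v (mkv 5 0 2) = ((mkv 3 4 2) :: 7^3)" by (simp add: mk3_mulv mkv_eq)
  show ?thesis using S1_step[OF s16 R12_H] unfolding e .
qed

lemma s26: "(mkv 5 0 5) \<in> S1"
proof -
  have e: "(mk3 2 2 0 5 2 0 0 0 1) *v (mkv 3 3 5) = ((mkv 5 0 5) :: 7^3)" by (simp add: mk3_mulv mkv_eq)
  show ?thesis using S1_step[OF s17 R12_H] unfolding e .
qed

lemma s27: "(mkv 4 4 2) \<in> S1"
proof -
  have e: "(mk3 2 2 0 5 2 0 0 0 1) *v (mkv 0 2 2) = ((mkv 4 4 2) :: 7^3)" by (simp add: mk3_mulv mkv_eq)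
  show ?thesis using S1_step[OF s18 R12_H] unfolding e .
qed

lemma s28: "(mkv 0 2 5) \<in> S1"
proof -
  have e: "(mk3 2 2 0 5 2 0 0 0 1) *v (mkv 3 4 5) = ((mkv 0 2 5) :: 7^3)" by (simp add: mk3_mulv mkv_eq)
  show ?thesis using S1_step[OF s19 R12_H] unfolding e .
qed

lemma s29: "(mkv 0 5 5) \<in> S1"
proof -
  have e: "(mk3 2 2 0 5 2 0 0 0 1) *v (mkv 4 3 5) = ((mkv 0 5 5) :: 7^3)" by (simp add: mk3_mulv mkv_eq)
  show ?thesis using S1_step[OF s20 R12_H] unfolding e .
qed

lemma s30: "(mkv 4 2 4) \<in> S1"
proof -
  have e: "(mk3 1 0 0 0 2 2 0 5 2) *v (mkv 4 3 5) = ((mkv 4 2 4) :: 7^3)" by (simp add: mk3_mulv mkv_eq)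
  show ?thesis using S1_step[OF s20 R23_H] unfolding e .
qed

lemma s31: "(mkv 4 5 4) \<in> S1"
proof -
  have e: "(mk3 2 2 0 5 2 0 0 0 1) *v (mkv 5 4 4) = ((mkv 4 5 4) :: 7^3)" by (simp add: mk3_mulv mkv_eq)
  show ?thesis using S1_step[OF s21 R12_H] unfolding e .
qed

lemma s32: "(mkv 2 4 3) \<in> S1"
proof -
  have e: "(mk3 1 0 0 0 2 2 0 5 2) *v (mkv 2 2 0) = ((mkv 2 4 3) :: 7^3)" by (simp add: mk3_mulv mkv_eq)
  show ?thesis using S1_step[OF s22 R23_H] unfolding e .
qed

lemma s33: "(mkv 4 5 3) \<in> S1"
proof -
  have e: "(mk3 2 2 0 5 2 0 0 0 1) *v (mkv 5 4 3) = ((mkv 4 5 3) :: 7^3)" by (simp add: mk3_mulv mkv_eq)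
  show ?thesis using S1_step[OF s24 R12_H] unfolding e .
qed

lemma s34: "(mkv 3 5 3) \<in> S1"
proof -
  have e: "(mk3 1 0 0 0 2 2 0 5 2) *v (mkv 3 4 2) = ((mkv 3 5 3) :: 7^3)" by (simp add: mk3_mulv mkv_eq)
  show ?thesis using S1_step[OF s25 R23_H] unfolding e .
qed

lemma s35: "(mkv 5 3 3) \<in> S1"
proof -
  have e: "(mk3 1 0 0 0 2 2 0 5 2) *v (mkv 5 0 5) = ((mkv 5 3 3) :: 7^3)" by (simp add: mk3_mulv mkv_eq)
  show ?thesis using S1_step[OF s26 R23_H] unfolding e .
qed

lemma s36: "(mkv 4 4 5) \<in> S1"
proof -
  have e: "(mk3 2 2 0 5 2 0 0 0 1) *v (mkv 0 2 5) = ((mkv 4 4 5) :: 7^3)" by (simp add: mk3_mulv mkv_eq)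
  show ?thesis using S1_step[OF s28 R12_H] unfolding e .
qed

lemma s37: "(mkv 0 0 6) \<in> S1"
proof -
  have e: "(mk3 1 0 0 0 2 2 0 5 2) *v (mkv 0 2 5) = ((mkv 0 0 6) :: 7^3)" by (simp add: mk3_mulv mkv_eq)
  show ?thesis using S1_step[OF s28 R23_H] unfolding e .
qed

lemma s38: "(mkv 2 0 5) \<in> S1"
proof -
  have e: "(mk3 1 0 0 0 2 2 0 5 2) *v (mkv 2 4 3) = ((mkv 2 0 5) :: 7^3)" by (simp add: mk3_mulv mkv_eq)
  show ?thesis using S1_step[OF s32 R23_H] unfolding e .
qed

lemma s39: "(mkv 4 2 3) \<in> S1"
proof -
  have e: "(mk3 2 2 0 5 2 0 0 0 1) *v (mkv 4 5 3) = ((mkv 4 2 3) :: 7^3)" by (simp add: mk3_mulv mkv_eq)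
  show ?thesis using S1_step[OF s33 R12_H] unfolding e .
qed

lemma s40: "(mkv 3 2 3) \<in> S1"
proof -
  have e: "(mk3 1 0 0 0 2 2 0 5 2) *v (mkv 3 5 3) = ((mkv 3 2 3) :: 7^3)" by (simp add: mk3_mulv mkv_eq)
  show ?thesis using S1_step[OF s34 R23_H] unfolding e .
qed

lemma s41: "(mkv 2 3 3) \<in> S1"
proof -
  have e: "(mk3 2 2 0 5 2 0 0 0 1) *v (mkv 5 3 3) = ((mkv 2 3 3) :: 7^3)" by (simp add: mk3_mulv mkv_eq)
  show ?thesis using S1_step[OF s35 R12_H] unfolding e .
qed

lemma step1: "x*x+y*y+z*z = (1::7) \<Longrightarrow> mkv x y z \<in> S1"
proof -
  have "\<forall>x y z::7. x*x+y*y+z*z = 1 \<longrightarrow> mkv x y z \<in> S1"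
    apply (simp only: all7)
    apply (simp add: s0 s1 s2 s3 s4 s5 s6 s7 s8 s9 s10 s11 s12 s13 s14 s15 s16 s17 s18 s19 s20 s21 s22 s23 s24 s25 s26 s27 s28 s29 s30 s31 s32 s33 s34 s35 s36 s37 s38 s39 s40 s41)
    done
  then show "x*x+y*y+z*z = (1::7) \<Longrightarrow> mkv x y z \<in> S1" by blast
qed

lemma r1: "mk3 1 0 0 0 2 2 0 5 2 \<in> HH"
proof -
  have e: "(mk3 1 0 0 0 1 0 0 0 1) ** (mk3 1 0 0 0 2 2 0 5 2) = (mk3 1 0 0 0 2 2 0 5 2 :: 7^3^3)" by (simp add: mk3_mult mk3_eq)
  show ?thesis using HH_mult[OF I_H R23_H] unfolding e .
qed

lemma r2: "mk3 1 0 0 0 0 1 0 6 0 \<in> HH"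
proof -
  have e: "(mk3 1 0 0 0 2 2 0 5 2) ** (mk3 1 0 0 0 2 2 0 5 2) = (mk3 1 0 0 0 0 1 0 6 0 :: 7^3^3)" by (simp add: mk3_mult mk3_eq)
  show ?thesis using HH_mult[OF r1 R23_H] unfolding e .
qed

lemma r3: "mk3 1 0 0 0 5 2 0 5 5 \<in> HH"
proof -
  have e: "(mk3 1 0 0 0 0 1 0 6 0) ** (mk3 1 0 0 0 2 2 0 5 2) = (mk3 1 0 0 0 5 2 0 5 5 :: 7^3^3)" by (simp add: mk3_mult mk3_eq)
  show ?thesis using HH_mult[OF r2 R23_H] unfolding e .
qed

lemma r4: "mk3 1 0 0 0 6 0 0 0 6 \<in> HH"
proof -
  have e: "(mk3 1 0 0 0 5 2 0 5 5) ** (mk3 1 0 0 0 2 2 0 5 2) = (mk3 1 0 0 0 6 0 0 0 6 :: 7^3^3)" by (simp add: mk3_mult mk3_eq)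
  show ?thesis using HH_mult[OF r3 R23_H] unfolding e .
qed

lemma r5: "mk3 1 0 0 0 5 5 0 2 5 \<in> HH"
proof -
  have e: "(mk3 1 0 0 0 6 0 0 0 6) ** (mk3 1 0 0 0 2 2 0 5 2) = (mk3 1 0 0 0 5 5 0 2 5 :: 7^3^3)" by (simp add: mk3_mult mk3_eq)
  show ?thesis using HH_mult[OF r4 R23_H] unfolding e .
qed

lemma r6: "mk3 1 0 0 0 0 6 0 1 0 \<in> HH"
proof -
  have e: "(mk3 1 0 0 0 5 5 0 2 5) ** (mk3 1 0 0 0 2 2 0 5 2) = (mk3 1 0 0 0 0 6 0 1 0 :: 7^3^3)" by (simp add: mk3_mult mk3_eq)
  show ?thesis using HH_mult[OF r5 R23_H] unfolding e .
qed

lemma r7: "mk3 1 0 0 0 2 5 0 2 2 \<in> HH"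
proof -
  have e: "(mk3 1 0 0 0 0 6 0 1 0) ** (mk3 1 0 0 0 2 2 0 5 2) = (mk3 1 0 0 0 2 5 0 2 2 :: 7^3^3)" by (simp add: mk3_mult mk3_eq)
  show ?thesis using HH_mult[OF r6 R23_H] unfolding e .
qed

lemma q0: "\<exists>p q. mk3 1 0 0 0 1 p 0 0 q \<in> HH" using I_H by blast

lemma q1: "\<exists>p q. mk3 1 0 0 0 2 p 0 5 q \<in> HH" using r1 by blast

lemma q2: "\<exists>p q. mk3 1 0 0 0 0 p 0 6 q \<in> HH" using r2 by blast

lemma q3: "\<exists>p q. mk3 1 0 0 0 5 p 0 5 q \<in> HH" using r3 by blast

lemma q4: "\<exists>p q. mk3 1 0 0 0 6 p 0 0 q \<in> HH" using r4 by blast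

lemma q5: "\<exists>p q. mk3 1 0 0 0 5 p 0 2 q \<in> HH" using r5 by blast

lemma q6: "\<exists>p q. mk3 1 0 0 0 0 p 0 1 q \<in> HH" using r6 by blast

lemma q7: "\<exists>p q. mk3 1 0 0 0 2 p 0 2 q \<in> HH" using r7 by blast

lemma step2: "b*b+d*d = (1::7) \<Longrightarrow> \<exists>p q. mk3 1 0 0 0 b p 0 d q \<in> HH"
proof -
  have "\<forall>b d::7. b*b+d*d = 1 \<longrightarrow> (\<exists>p q. mk3 1 0 0 0 b p 0 d q \<in> HH)"
    apply (simp only: all7)
    apply (simp add: q0 q1 q2 q3 q4 q5 q6 q7)
    done
  then show "b*b+d*d = (1::7) \<Longrightarrow> \<exists>p q. mk3 1 0 0 0 b p 0 d q \<in> HH" by blast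
qed




lemma mulv_e1: "M *v mkv 1 0 0 = mkv (M$1$1) (M$2$1) (M$3$1 :: 'a::comm_ring_1)"
  unfolding matrix_vector_mult_def by (simp add: vec_eq_iff ex3 sum3)

lemma mulv_e2: "M *v mkv 0 1 0 = mkv (M$1$2) (M$2$2) (M$3$2 :: 'a::comm_ring_1)"
  unfolding matrix_vector_mult_def by (simp add: vec_eq_iff ex3 sum3)

lemma TM: fixes M :: "'a::comm_ring_1^3^3" shows "transpose M ** M = mk3
  (M$1$1*M$1$1 + M$2$1*M$2$1 + M$3$1*M$3$1) (M$1$1*M$1$2 + M$2$1*M$2$2 + M$3$1*M$3$2) (M$1$1*M$1$3 + M$2$1*M$2$3 + M$3$1*M$3$3)
  (M$1$2*M$1$1 + M$2$2*M$2$1 + M$3$2*M$3$1) (M$1$2*M$1$2 + M$2$2*M$2$2 + M$3$2*M$3$2) (M$1$2*M$1$3 + M$2$2*M$2$3 + M$3$2*M$3$3)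
  (M$1$3*M$1$1 + M$2$3*M$2$1 + M$3$3*M$3$1) (M$1$3*M$1$2 + M$2$3*M$2$2 + M$3$3*M$3$2) (M$1$3*M$1$3 + M$2$3*M$2$3 + M$3$3*M$3$3 :: 'a::comm_ring_1)"
  unfolding matrix_matrix_mult_def transpose_def by (simp add: vec_eq_iff ex3 sum3)

lemma sq1: "(t::7) * t = 1 \<Longrightarrow> t = 1 \<or> t = -1"
proof -
  have "\<forall>t::7. t * t = 1 \<longrightarrow> t = 1 \<or> t = -1" by (simp only: all7) simp
  then show "t * t = 1 \<Longrightarrow> t = 1 \<or> t = -1" by blast
qed

lemma conj_orth: "h \<in> HH \<Longrightarrow> transpose A ** A = mat 1 \<Longrightarrow> transpose (transpose h ** A) ** (transpose h ** A) = mat 1"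
proof -
  assume h: "h \<in> HH" and o: "transpose A ** A = mat 1"
  have "transpose (transpose h ** A) ** (transpose h ** A) = transpose A ** (h ** transpose h) ** A"
    by (simp add: matrix_transpose_mul matrix_mul_assoc)
  then show ?thesis using HH_orth[OF h] o by simp
qed

lemma main: assumes o: "transpose A ** A = mat 1" shows "A \<in> HH"
proof -
  have oA: "A$1$1*A$1$1 + A$2$1*A$2$1 + A$3$1*A$3$1 = 1"
    using o unfolding TM mk3_one mk3_eq by simp
  obtain h where h: "h \<in> HH" "h *v mkv 1 0 0 = mkv (A$1$1) (A$2$1) (A$3$1)"
    using step1[OF oA] unfolding S1_def by auto
  define M where "M = transpose h ** A"
  have oM: "transpose M ** M = mat 1" unfolding M_def by (rule conj_orth[OF h(1) o])
  have "M *v mkv 1 0 0 = transpose h *v (A *v mkv 1 0 0)"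
    unfolding M_def by (simp add: matrix_vector_mul_assoc)
  also have "\<dots> = transpose h *v (h *v mkv 1 0 0)" using h(2) mulv_e1[of A] by simp
  also have "\<dots> = (transpose h ** h) *v mkv 1 0 0" by (simp add: matrix_vector_mul_assoc)
  also have "\<dots> = mkv 1 0 0" using HH_orth[OF h(1)] by simp
  finally have "mkv (M$1$1) (M$2$1) (M$3$1) = mkv 1 0 0" by (simp add: mulv_e1)
  then have M1: "M$1$1 = 1" "M$2$1 = 0" "M$3$1 = 0" unfolding mkv_eq by simp_all
  then have M2: "M$1$2 = 0" "M$1$3 = 0" "M$2$2*M$2$2 + M$3$2*M$3$2 = 1"
    using oM unfolding TM mk3_one mk3_eq by auto
  obtain p q where h2: "mk3 1 0 0 0 (M$2$2) p 0 (M$3$2) q \<in> HH"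
    using step2[OF M2(3)] by auto
  define h2 where "h2 = mk3 1 0 0 0 (M$2$2) p 0 (M$3$2) q"
  have h2H: "h2 \<in> HH" using h2 unfolding h2_def .
  define N where "N = transpose h2 ** M"
  have oN: "transpose N ** N = mat 1" unfolding N_def by (rule conj_orth[OF h2H oM])
  have "N *v mkv 1 0 0 = transpose h2 *v (M *v mkv 1 0 0)"
    unfolding N_def by (simp add: matrix_vector_mul_assoc)
  also have "\<dots> = mkv 1 0 0" unfolding mulv_e1 M1 h2_def mk3_transpose mk3_mulv by simp
  finally have N1: "N$1$1 = 1" "N$2$1 = 0" "N$3$1 = 0" unfolding mulv_e1 mkv_eq by simp_all
  have "N *v mkv 0 1 0 = transpose h2 *v (M *v mkv 0 1 0)"
    unfolding N_def by (simp add: matrix_vector_mul_assoc)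
  also have "M *v mkv 0 1 0 = h2 *v mkv 0 1 0" unfolding mulv_e2 M2 h2_def mk3_mulv by simp
  also have "transpose h2 *v (h2 *v mkv 0 1 0) = mkv 0 1 0"
    using HH_orth[OF h2H] by (simp add: matrix_vector_mul_assoc)
  finally have N2: "N$1$2 = 0" "N$2$2 = 1" "N$3$2 = 0" unfolding mulv_e2 mkv_eq by simp_all
  have N3: "N$1$3 = 0" "N$2$3 = 0" "N$3$3 * N$3$3 = 1"
    using oN N1 N2 unfolding TM mk3_one mk3_eq by auto
  have NH: "N \<in> HH"
  proof -
    have eN: "N = mk3 1 0 0 0 1 0 0 0 (N$3$3)"
      by (subst mk3_eta) (simp only: N1 N2 N3(1,2))
    from sq1[OF N3(3)] show ?thesis
      using I_H D3_H eN by auto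
  qed
  have "h ** (h2 ** N) = h ** ((h2 ** transpose h2) ** M)"
    unfolding N_def by (simp add: matrix_mul_assoc)
  also have "\<dots> = h ** M" using HH_orth[OF h2H] by simp
  also have "\<dots> = (h ** transpose h) ** A" unfolding M_def by (simp add: matrix_mul_assoc)
  also have "\<dots> = A" using HH_orth[OF h(1)] by simp
  finally show ?thesis using HH_mult[OF h(1) HH_mult[OF h2H NH]] by simp
qed

theorem lemma2p2:
  shows "PGammaL_to_PO3 ` GammaL = PO3_7"
proof
  show "PGammaL_to_PO3 ` GammaL \<subseteq> PO3_7" by (rule sub)
  show "PO3_7 \<subseteq> PGammaL_to_PO3 ` GammaL"
  proof
    fix X assume "X \<in> PO3_7"
    then obtain A where A: "A \<in> O3_7" "X = po_class A" unfolding PO3_7_def by auto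
    then have "A \<in> HH" using main unfolding O3_7_def by simp
    then obtain g where "g \<in> GammaL" "A = red_mat g" unfolding HH_def by auto
    then show "X \<in> PGammaL_to_PO3 ` GammaL" using A unfolding PGammaL_to_PO3_def by auto
  qed
qed


end
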